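(* Let $\mathbf{A}=\langle A,\wedge,\vee,\cdot,1,0,{\sim},-,'\rangle$ be a quasi relation algebra that is $n$-periodic for some odd natural number $n$, and let $m$ be an odd natural number. (i) If $m\le n$, then $\mathbf{A}\cong\mathbf{A}^{\triangledown m}$ via the map $a\mapsto -^{n-m}a$, and $\mathbf{A}\cong\mathbf{A}^{\vartriangle m}$ via the map $a\mapsto{\sim}^{n-m}a$. (ii) If $m>n$, then $\mathbf{A}\cong\mathbf{A}^{\triangledown m}$ via the map $a\mapsto{\sim}^{m-n}a$, and $\mathbf{A}\cong\mathbf{A}^{\vartriangle m}$ via the map $a\mapsto -^{m-n}a$.
   Context: An FL-algebra $\langle A,\wedge,\vee,\cdot,1,\backslash,/,0\rangle$ is a residuated lattice (a lattice, a monoid $\langle A,\cdot,1\rangle$, with $a\cdot b\le c \iff a\le c/b\iff b\le a\backslash c$) with an arbitrary constant $0$. Define ${\sim}a=a\backslash 0$, $-a=0/a$, $a+b={\sim}(-b\cdot -a)$. It is an InFL-algebra if ${\sim}{-}a={-}{\sim}a=a$ for all $a$. A quasi relation algebra (qRA) is an InFL-algebra with a unary operation $'$ with $a''=a$, $(a\vee b)'=a'\wedge b'$, $({\sim}a)'=-(a')$, $(a\cdot b)'=a'+b'$; signature $\langle A,\wedge,\vee,\cdot,1,0,{\sim},-,'\rangle$. ${\sim}^k a$, $-^k a$ are $k$-fold applications. The qRA is $n$-periodic if $n$ is the smallest positive integer with ${\sim}^n a=-^n a$ for all $a\in A$. For $k\in\omega$, $\mathbf{A}^{\triangledown k}$ (resp.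 $\mathbf{A}^{\vartriangle k}$) is the algebra $\langle A,\wedge,\vee,\cdot,1,0,{\sim},-,{}^{\triangledown k}\rangle$ (resp. with ${}^{\vartriangle k}$), where $a^{\triangledown k}={\sim}^{2k}(a')$ and $a^{\vartriangle k}=-^{2k}(a')$; these are qRAs. *)

theory Defs
  imports Main
begin

text \<open>An algebra in the full signature of FL-algebras together with the qRA
  involution. The carrier is the whole type 'a.\<close>

record 'a flp_alg =
  meet :: "'a \<Rightarrow> 'a \<Rightarrow> 'a"
  join :: "'a \<Rightarrow> 'a \<Rightarrow> 'a"
  mult :: "'a \<Rightarrow> 'a \<Rightarrow> 'a"
  one  :: "'a"
  ldiv :: "'a \<Rightarrow> 'a \<Rightarrow> 'a"
  rdiv :: "'a \<Rightarrow> 'a \<Rightarrow> 'a"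
  zero :: "'a"
  prime :: "'a \<Rightarrow> 'a"

definition leq :: "'a flp_alg \<Rightarrow> 'a \<Rightarrow> 'a \<Rightarrow> bool" where
  "leq A a b \<longleftrightarrow> meet A a b = a"

definition tl :: "'a flp_alg \<Rightarrow> 'a \<Rightarrow> 'a" where   (* ~a = a \ 0 *)
  "tl A a = ldiv A a (zero A)"

definition mn :: "'a flp_alg \<Rightarrow> 'a \<Rightarrow> 'a" where   (* -a = 0 / a *)
  "mn A a = rdiv A (zero A) a"

definition pls :: "'a flp_alg \<Rightarrow> 'a \<Rightarrow> 'a \<Rightarrow> 'a" where
  "pls A a b = tl A (mult A (mn A b) (mn A a))"

definition FL_algebra :: "'a flp_alg \<Rightarrow> bool" where
  "FL_algebra A \<longleftrightarrow>
     (\<forall>a b c. meet A (meet A a b) c = meet A a (meet A b c)) \<and>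
     (\<forall>a b c. join A (join A a b) c = join A a (join A b c)) \<and>
     (\<forall>a b. meet A a b = meet A b a) \<and>
     (\<forall>a b. join A a b = join A b a) \<and>
     (\<forall>a b. meet A a (join A a b) = a) \<and>
     (\<forall>a b. join A a (meet A a b) = a) \<and>
     (\<forall>a b c. mult A (mult A a b) c = mult A a (mult A b c)) \<and>
     (\<forall>a. mult A (one A) a = a \<and> mult A a (one A) = a) \<and>
     (\<forall>a b c. (leq A (mult A a b) c \<longleftrightarrow> leq A a (rdiv A c b)) \<and>
              (leq A (mult A a b) c \<longleftrightarrow> leq A b (ldiv A a c)))"

definition InFL :: "'a flp_alg \<Rightarrow> bool" where
  "InFL A \<longleftrightarrow> FL_algebra A \<and> (\<forall>a. tl A (mn A a) = a \<and> mn A (tl A a) = a)"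

definition qRA :: "'a flp_alg \<Rightarrow> bool" where
  "qRA A \<longleftrightarrow> InFL A \<and>
     (\<forall>a. prime A (prime A a) = a) \<and>
     (\<forall>a b. prime A (join A a b) = meet A (prime A a) (prime A b)) \<and>
     (\<forall>a. prime A (tl A a) = mn A (prime A a)) \<and>
     (\<forall>a b. prime A (mult A a b) = pls A (prime A a) (prime A b))"

definition periodic :: "'a flp_alg \<Rightarrow> nat \<Rightarrow> bool" where
  "periodic A n \<longleftrightarrow> 0 < n \<and> (\<forall>a. (tl A ^^ n) a = (mn A ^^ n) a) \<and>
     (\<forall>k. 0 < k \<and> k < n \<longrightarrow> \<not> (\<forall>a. (tl A ^^ k) a = (mn A ^^ k) a))"

definition nabla :: "'a flp_alg \<Rightarrow> nat \<Rightarrow> 'a flp_alg" where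
  "nabla A k = A\<lparr>prime := (\<lambda>a. (tl A ^^ (2*k)) (prime A a))\<rparr>"

definition delta :: "'a flp_alg \<Rightarrow> nat \<Rightarrow> 'a flp_alg" where
  "delta A k = A\<lparr>prime := (\<lambda>a. (mn A ^^ (2*k)) (prime A a))\<rparr>"

definition qra_iso :: "'a flp_alg \<Rightarrow> 'b flp_alg \<Rightarrow> ('a \<Rightarrow> 'b) \<Rightarrow> bool" where
  "qra_iso A B f \<longleftrightarrow> bij f \<and>
     (\<forall>a b. f (meet A a b) = meet B (f a) (f b)) \<and>
     (\<forall>a b. f (join A a b) = join B (f a) (f b)) \<and>
     (\<forall>a b. f (mult A a b) = mult B (f a) (f b)) \<and>
     f (one A) = one B \<and> f (zero A) = zero B \<and>
     (\<forall>a. f (tl A a) = tl B (f a)) \<and>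
     (\<forall>a. f (mn A a) = mn B (f a)) \<and>
     (\<forall>a. f (prime A a) = prime B (f a))"

end

theory Submission
  imports Defs
begin

definition aut0 :: "'a flp_alg \<Rightarrow> ('a \<Rightarrow> 'a) \<Rightarrow> bool" where
  "aut0 A f \<longleftrightarrow> bij f \<and> (\<forall>a b. f (meet A a b) = meet A (f a) (f b)) \<and> (\<forall>a b. f (join A a b) = join A (f a) (f b))
    \<and> (\<forall>a b. f (mult A a b) = mult A (f a) (f b)) \<and> f (one A) = one A \<and> f (zero A) = zero A
    \<and> (\<forall>a. f (tl A a) = tl A (f a)) \<and> (\<forall>a. f (mn A a) = mn A (f a))"

locale QQ = fixes A :: "'a flp_alg" assumes q: "qRA A"
begin

abbreviation "T \<equiv> tl A"
abbreviation "M \<equiv> mn A"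
abbreviation "P \<equiv> prime A"
abbreviation le (infix "\<sqsubseteq>" 50) where "a \<sqsubseteq> b \<equiv> leq A a b"
abbreviation "mt \<equiv> meet A"
abbreviation "jn \<equiv> join A"
abbreviation "mu \<equiv> mult A"
abbreviation "z \<equiv> zero A"

lemma fl: "FL_algebra A" using q by (simp add: qRA_def InFL_def)
lemma massoc: "mt (mt a b) c = mt a (mt b c)" using fl unfolding FL_algebra_def by metis
lemma jassoc: "jn (jn a b) c = jn a (jn b c)" using fl unfolding FL_algebra_def by metis
lemma mcomm: "mt a b = mt b a" using fl unfolding FL_algebra_def by metis
lemma jcomm: "jn a b = jn b a" using fl unfolding FL_algebra_def by metis
lemma ab1: "mt a (jn a b) = a" using fl unfolding FL_algebra_def by metis
lemma ab2: "jn a (mt a b) = a" using fl unfolding FL_algebra_def by metis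
lemma muassoc: "mu (mu a b) c = mu a (mu b c)" using fl unfolding FL_algebra_def by metis
lemma one1: "mu (one A) a = a" using fl unfolding FL_algebra_def by metis
lemma one2: "mu a (one A) = a" using fl unfolding FL_algebra_def by metis
lemma res1: "mu a b \<sqsubseteq> c \<longleftrightarrow> a \<sqsubseteq> rdiv A c b" using fl unfolding FL_algebra_def by metis
lemma res2: "mu a b \<sqsubseteq> c \<longleftrightarrow> b \<sqsubseteq> ldiv A a c" using fl unfolding FL_algebra_def by metis
lemma TM[simp]: "T (M a) = a" using q by (simp add: qRA_def InFL_def)
lemma MT[simp]: "M (T a) = a" using q by (simp add: qRA_def InFL_def)
lemma PP[simp]: "P (P a) = a" using q by (simp add: qRA_def)
lemma PT: "P (T a) = M (P a)" using q by (simp add: qRA_def)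

lemma midem: "mt a a = a" by (metis ab1 ab2)
lemma refl: "a \<sqsubseteq> a" by (simp add: leq_def midem)
lemma antisym: "a \<sqsubseteq> b \<Longrightarrow> b \<sqsubseteq> a \<Longrightarrow> a = b" by (metis leq_def mcomm)
lemma trans: "a \<sqsubseteq> b \<Longrightarrow> b \<sqsubseteq> c \<Longrightarrow> a \<sqsubseteq> c" by (metis leq_def massoc)
lemma below_eq: "(\<And>x. x \<sqsubseteq> p \<longleftrightarrow> x \<sqsubseteq> r) \<Longrightarrow> p = r" by (metis refl antisym)
lemma leq_join: "a \<sqsubseteq> b \<longleftrightarrow> jn a b = b" by (metis leq_def ab1 ab2 mcomm jcomm)
lemma lub: "jn a b \<sqsubseteq> c \<longleftrightarrow> a \<sqsubseteq> c \<and> b \<sqsubseteq> c"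
proof
  assume "jn a b \<sqsubseteq> c"
  moreover have "a \<sqsubseteq> jn a b" "b \<sqsubseteq> jn a b" by (simp_all add: leq_def ab1) (metis ab1 jcomm)
  ultimately show "a \<sqsubseteq> c \<and> b \<sqsubseteq> c" using trans by blast
next
  assume "a \<sqsubseteq> c \<and> b \<sqsubseteq> c"
  then show "jn a b \<sqsubseteq> c" by (metis leq_join jassoc)
qed
lemma glb: "c \<sqsubseteq> mt a b \<longleftrightarrow> c \<sqsubseteq> a \<and> c \<sqsubseteq> b"
proof
  assume h: "c \<sqsubseteq> mt a b"
  have "mt a b \<sqsubseteq> a" "mt a b \<sqsubseteq> b" by (simp_all add: leq_def) (metis massoc mcomm midem)+
  then show "c \<sqsubseteq> a \<and> c \<sqsubseteq> b" using h trans by blast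
next
  assume "c \<sqsubseteq> a \<and> c \<sqsubseteq> b"
  then show "c \<sqsubseteq> mt a b" by (metis leq_def massoc)
qed

lemma galT: "x \<sqsubseteq> T a \<longleftrightarrow> mu a x \<sqsubseteq> z" by (simp add: tl_def res2)
lemma galM: "x \<sqsubseteq> M a \<longleftrightarrow> mu x a \<sqsubseteq> z" by (simp add: mn_def res1)

lemma T_join: "T (jn a b) = mt (T a) (T b)"
proof (rule below_eq)
  fix x
  have "x \<sqsubseteq> T (jn a b) \<longleftrightarrow> jn a b \<sqsubseteq> M x" by (simp only: galT galM)
  also have "\<dots> \<longleftrightarrow> x \<sqsubseteq> T a \<and> x \<sqsubseteq> T b" unfolding lub by (simp only: galT galM)
  finally show "x \<sqsubseteq> T (jn a b) \<longleftrightarrow> x \<sqsubseteq> mt (T a) (T b)" by (simp add: glb)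
qed
lemma M_join: "M (jn a b) = mt (M a) (M b)"
proof (rule below_eq)
  fix x
  have "x \<sqsubseteq> M (jn a b) \<longleftrightarrow> jn a b \<sqsubseteq> T x" by (simp only: galT galM)
  also have "\<dots> \<longleftrightarrow> x \<sqsubseteq> M a \<and> x \<sqsubseteq> M b" unfolding lub by (simp only: galT galM)
  finally show "x \<sqsubseteq> M (jn a b) \<longleftrightarrow> x \<sqsubseteq> mt (M a) (M b)" by (simp add: glb)
qed
lemma T_meet: "T (mt a b) = jn (T a) (T b)"
proof -
  have "mt a b = M (jn (T a) (T b))" by (simp add: M_join)
  then show ?thesis by simp
qed
lemma M_meet: "M (mt a b) = jn (M a) (M b)"
proof -
  have "mt a b = T (jn (M a) (M b))" by (simp add: T_join)
  then show ?thesis by simp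
qed

lemma T1: "T (one A) = z"
  by (rule below_eq) (simp add: galT one1)
lemma M1: "M (one A) = z"
  by (rule below_eq) (simp add: galM one2)
lemma T0: "T z = one A" by (metis M1 TM)
lemma M0: "M z = one A" by (metis T1 MT)

lemma cyc: "mu u (T (T v)) \<sqsubseteq> z \<longleftrightarrow> mu v u \<sqsubseteq> z"
  by (metis galM galT MT)

lemma eq_by_mu: "(\<And>x. mu x p \<sqsubseteq> z \<longleftrightarrow> mu x r \<sqsubseteq> z) \<Longrightarrow> p = r"
proof -
  assume h: "\<And>x. mu x p \<sqsubseteq> z \<longleftrightarrow> mu x r \<sqsubseteq> z"
  have "M p = M r" by (rule below_eq) (simp add: galM h)
  then show "p = r" by (metis TM)
qed

lemma TT_mult: "T (T (mu a b)) = mu (T (T a)) (T (T b))"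
proof (rule eq_by_mu)
  fix x
  have "mu x (mu (T (T a)) (T (T b))) \<sqsubseteq> z \<longleftrightarrow> mu (mu x (T (T a))) (T (T b)) \<sqsubseteq> z"
    by (simp add: muassoc)
  also have "\<dots> \<longleftrightarrow> mu b (mu x (T (T a))) \<sqsubseteq> z" by (rule cyc)
  also have "\<dots> \<longleftrightarrow> mu (mu b x) (T (T a)) \<sqsubseteq> z" by (simp add: muassoc)
  also have "\<dots> \<longleftrightarrow> mu a (mu b x) \<sqsubseteq> z" by (rule cyc)
  also have "\<dots> \<longleftrightarrow> mu (mu a b) x \<sqsubseteq> z" by (simp add: muassoc)
  also have "\<dots> \<longleftrightarrow> mu x (T (T (mu a b))) \<sqsubseteq> z" by (rule cyc[symmetric])
  finally show "mu x (T (T (mu a b))) \<sqsubseteq> z \<longleftrightarrow> mu x (mu (T (T a)) (T (T b))) \<sqsubseteq> z" by simp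
qed

abbreviation "aut \<equiv> aut0 A"
lemmas aut_def = aut0_def[of A]

lemma bijT: "bij T" by (metis MT TM bij_betw_byWitness top_greatest surj_def surjI inj_on_inverseI subsetI UNIV_I) 
lemma bijM: "bij M" by (metis MT TM bij_betw_byWitness top_greatest surj_def surjI inj_on_inverseI subsetI UNIV_I) 

lemma aut_TT: "aut (T ^^ 2)"
  unfolding aut_def
  by (simp add: numeral_2_eq_2 bijT bij_comp T_meet T_join TT_mult T0 T1 M0 M1)

lemma aut_MM: "aut (M ^^ 2)"
proof -
  have e: "M (M x) = y \<longleftrightarrow> x = T (T y)" for x y by auto
  show ?thesis unfolding aut_def
  by (simp add: numeral_2_eq_2 bijM bij_comp M_meet M_join e TT_mult T0 T1 M0 M1)
qed

lemma aut_pow: "aut f \<Longrightarrow> aut (f ^^ k)"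
  by (induction k) (auto simp: aut_def bij_comp)

lemma aut_even: "even d \<Longrightarrow> aut (T ^^ d) \<and> aut (M ^^ d)"
proof -
  assume "even d"
  then obtain k where "d = 2 * k" by blast
  then show ?thesis using aut_pow[OF aut_TT, of k] aut_pow[OF aut_MM, of k]
    by (simp add: funpow_mult)
qed

lemma PM: "P (M a) = T (P a)"
  by (metis PT PP TM MT)
lemma P_Mk: "P ((M ^^ k) a) = (T ^^ k) (P a)"
  by (induction k) (auto simp: PM)
lemma P_Tk: "P ((T ^^ k) a) = (M ^^ k) (P a)"
  by (induction k) (auto simp: PT)
lemma TkMk: "(T ^^ k) ((M ^^ k) a) = a"
  by (induction k arbitrary: a) (auto simp: funpow_swap1)
lemma MkTk: "(M ^^ k) ((T ^^ k) a) = a"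
  by (induction k arbitrary: a) (auto simp: funpow_swap1)

end

lemma iso_nabla:
  assumes "aut0 A f" "\<And>a. f (prime A a) = (tl A ^^ (2*m)) (prime A (f a))"
  shows "qra_iso A (nabla A m) f"
  using assms(1)[unfolded aut0_def] assms(2) by (simp add: qra_iso_def nabla_def tl_def mn_def)

lemma iso_delta:
  assumes "aut0 A f" "\<And>a. f (prime A a) = (mn A ^^ (2*m)) (prime A (f a))"
  shows "qra_iso A (delta A m) f"
  using assms(1)[unfolded aut0_def] assms(2) by (simp add: qra_iso_def delta_def tl_def mn_def)

theorem proposition2p6:
  fixes A :: "'a flp_alg" and n m :: nat
  assumes "qRA A" and "periodic A n" and "odd n" and "odd m"
  shows "(m \<le> n \<longrightarrow> qra_iso A (nabla A m) (mn A ^^ (n - m)) \<and>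
                     qra_iso A (delta A m) (tl A ^^ (n - m))) \<and>
         (n < m \<longrightarrow> qra_iso A (nabla A m) (tl A ^^ (m - n)) \<and>
                     qra_iso A (delta A m) (mn A ^^ (m - n)))"
proof -
  interpret QQ A by (rule QQ.intro) (rule assms(1))
  have per: "(T ^^ n) a = (M ^^ n) a" for a using assms(2) by (simp add: periodic_def)
  have T2n: "(T ^^ (n+n)) a = a" for a
    by (metis TkMk per mult_2 funpow_add comp_apply)
  have M2n: "(M ^^ (n+n)) a = a" for a
    by (metis MkTk per mult_2 funpow_add comp_apply)
  have T2n': "(T ^^ (2*n)) a = a" for a using T2n by (simp add: mult_2)
  have M2n': "(M ^^ (2*n)) a = a" for a using M2n by (simp add: mult_2)
  have ev1: "even (n - m)" "even (m - n)" using assms(3,4) by auto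
  show ?thesis
  proof (intro conjI impI)
    assume mn: "m \<le> n"
    show "qra_iso A (nabla A m) (M ^^ (n - m))"
    proof (rule iso_nabla)
      show "aut (M ^^ (n - m))" using aut_even ev1 by blast
      fix a
      have "(T ^^ (2*m)) (P ((M ^^ (n - m)) a)) = (T ^^ (2*m + (n - m))) (P a)"
        by (simp add: P_Mk funpow_add)
      also have "\<dots> = (T ^^ (n + m)) (P a)" using mn by (simp add: algebra_simps)
      also have "\<dots> = (T ^^ (n + m)) ((T ^^ (n - m)) ((M ^^ (n - m)) (P a)))" by (simp add: TkMk)
      also have "\<dots> = (T ^^ (n+n)) ((M ^^ (n - m)) (P a))" using mn
        by (simp add: funpow_add[symmetric, THEN fun_cong, simplified] algebra_simps)
      also have "\<dots> = (M ^^ (n - m)) (P a)" by (rule T2n)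
      finally show "(M ^^ (n - m)) (P a) = (T ^^ (2*m)) (P ((M ^^ (n - m)) a))" by simp
    qed
    show "qra_iso A (delta A m) (T ^^ (n - m))"
    proof (rule iso_delta)
      show "aut (T ^^ (n - m))" using aut_even ev1 by blast
      fix a
      have "(M ^^ (2*m)) (P ((T ^^ (n - m)) a)) = (M ^^ (2*m + (n - m))) (P a)"
        by (simp add: P_Tk funpow_add)
      also have "\<dots> = (M ^^ (n + m)) (P a)" using mn by (simp add: algebra_simps)
      also have "\<dots> = (M ^^ (n + m)) ((M ^^ (n - m)) ((T ^^ (n - m)) (P a)))" by (simp add: MkTk)
      also have "\<dots> = (M ^^ (n+n)) ((T ^^ (n - m)) (P a))" using mn
        by (simp add: funpow_add[symmetric, THEN fun_cong, simplified] algebra_simps)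
      also have "\<dots> = (T ^^ (n - m)) (P a)" by (rule M2n)
      finally show "(T ^^ (n - m)) (P a) = (M ^^ (2*m)) (P ((T ^^ (n - m)) a))" by simp
    qed
  next
    assume mn: "n < m"
    have eqm: "2*m = (m - n) + 2*n + (m - n)" using mn by simp
    show "qra_iso A (nabla A m) (T ^^ (m - n))"
    proof (rule iso_nabla)
      show "aut (T ^^ (m - n))" using aut_even ev1 by blast
      fix a
      have "(T ^^ (2*m)) (P ((T ^^ (m - n)) a)) = (T ^^ (2*m)) ((M ^^ (m - n)) (P a))"
        by (simp add: P_Tk)
      also have "\<dots> = (T ^^ (m - n)) ((T ^^ (2*n)) ((T ^^ (m - n)) ((M ^^ (m - n)) (P a))))"
        using mn by (subst eqm) (simp only: funpow_add comp_apply)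
      also have "\<dots> = (T ^^ (m - n)) (P a)" by (simp add: TkMk T2n')
      finally show "(T ^^ (m - n)) (P a) = (T ^^ (2*m)) (P ((T ^^ (m - n)) a))" by simp
    qed
    show "qra_iso A (delta A m) (M ^^ (m - n))"
    proof (rule iso_delta)
      show "aut (M ^^ (m - n))" using aut_even ev1 by blast
      fix a
      have "(M ^^ (2*m)) (P ((M ^^ (m - n)) a)) = (M ^^ (2*m)) ((T ^^ (m - n)) (P a))"
        by (simp add: P_Mk)
      also have "\<dots> = (M ^^ (m - n)) ((M ^^ (2*n)) ((M ^^ (m - n)) ((T ^^ (m - n)) (P a))))"
        using mn by (subst eqm) (simp only: funpow_add comp_apply)
      also have "\<dots> = (M ^^ (m - n)) (P a)" by (simp add: MkTk M2n')
      finally show "(M ^^ (m - n)) (P a) = (M ^^ (2*m)) (P ((M ^^ (m - n)) a))" by simp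
    qed
  qed
qed

end
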